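(* Let $h$ be a hospital and define $\mathrm{Ch}_h:2^{X_h}\to2^{X_h}$ as follows: given $X'\subseteq X_h$, sort $X'$ in non-increasing order of $f_h(x)/x_W$ (ties broken by a fixed order) as $x^{(1)},\dots,x^{(|X'|)}$; start with $Y=\emptyset$ and for $i=1,\dots,|X'|$, add $x^{(i)}$ to $Y$ if $w_h(Y)<B_h$; return $Y$. Then $\mathrm{Ch}_h$ satisfies SUB, IRC and COM.
   Context: Hospital $h$ has a finite set $X_h$ of contracts $x$ with wages $x_W$, $0<x_W\le B_h$, where $B_h>0$ is its budget, and an additive utility $f_h$ with $f_h(x)>0$, $f_h(Y)=\sum_{x\in Y}f_h(x)$. $w_h(Y)=\sum_{x\in Y}x_W$. For $\mathrm{Ch}_h$ with $\mathrm{Ch}_h(Y)\subseteq Y$: SUB means for all $Y''\subseteq Y'\subseteq X_h$, $Y''\setminus\mathrm{Ch}_h(Y'')\subseteq Y'\setminus\mathrm{Ch}_h(Y')$; IRC means for $Y'\subseteq X_h$, $Y''\subseteq X_h\setminus Y'$, if $\mathrm{Ch}_h(Y'\cup Y'')\subseteq Y'$ then $\mathrm{Ch}_h(Y')=\mathrm{Ch}_h(Y'\cup Y'')$; COM means for all $Y''\subseteq Y'\subseteq X_h$ with $w_h(Y'')\le\max\{B_h,w_h(\mathrm{Ch}_h(Y'))\}$, $f_h(\mathrm{Ch}_h(Y'))\ge f_h(Y'')$. *)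

theory Defs
  imports Complex_Main
begin

definition wtot :: "('a \<Rightarrow> real) \<Rightarrow> 'a set \<Rightarrow> real" where
  "wtot wage Y = (\<Sum>x\<in>Y. wage x)"

definition futil :: "('a \<Rightarrow> real) \<Rightarrow> 'a set \<Rightarrow> real" where
  "futil f Y = (\<Sum>x\<in>Y. f x)"

text \<open>Strict priority: x comes before y if its ratio f/wage is strictly larger,
  or the ratios are equal and x precedes y in the fixed tie-breaking order
  (given by an injective ranking tb, smaller rank first).\<close>
definition prec :: "('a \<Rightarrow> real) \<Rightarrow> ('a \<Rightarrow> real) \<Rightarrow> ('a \<Rightarrow> nat) \<Rightarrow> 'a \<Rightarrow> 'a \<Rightarrow> bool" where
  "prec f wage tb x y \<longleftrightarrow>
     f x / wage x > f y / wage y \<or> (f x / wage x = f y / wage y \<and> tb x < tb y)"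

definition sorted_contracts ::
  "('a \<Rightarrow> real) \<Rightarrow> ('a \<Rightarrow> real) \<Rightarrow> ('a \<Rightarrow> nat) \<Rightarrow> 'a set \<Rightarrow> 'a list" where
  "sorted_contracts f wage tb X' =
     (THE xs. set xs = X' \<and> distinct xs \<and> sorted_wrt (prec f wage tb) xs)"

definition greedy_step :: "real \<Rightarrow> ('a \<Rightarrow> real) \<Rightarrow> 'a set \<Rightarrow> 'a \<Rightarrow> 'a set" where
  "greedy_step B wage Y x = (if wtot wage Y < B then insert x Y else Y)"

definition Ch_greedy ::
  "real \<Rightarrow> ('a \<Rightarrow> real) \<Rightarrow> ('a \<Rightarrow> real) \<Rightarrow> ('a \<Rightarrow> nat) \<Rightarrow> 'a set \<Rightarrow> 'a set" where
  "Ch_greedy B f wage tb X' = foldl (greedy_step B wage) {} (sorted_contracts f wage tb X')"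

definition SUB :: "'a set \<Rightarrow> ('a set \<Rightarrow> 'a set) \<Rightarrow> bool" where
  "SUB X Ch \<longleftrightarrow> (\<forall>Y' Y''. Y'' \<subseteq> Y' \<and> Y' \<subseteq> X \<longrightarrow> Y'' - Ch Y'' \<subseteq> Y' - Ch Y')"

definition IRC :: "'a set \<Rightarrow> ('a set \<Rightarrow> 'a set) \<Rightarrow> bool" where
  "IRC X Ch \<longleftrightarrow> (\<forall>Y' Y''. Y' \<subseteq> X \<and> Y'' \<subseteq> X - Y' \<and> Ch (Y' \<union> Y'') \<subseteq> Y'
                      \<longrightarrow> Ch Y' = Ch (Y' \<union> Y''))"

definition COM :: "'a set \<Rightarrow> real \<Rightarrow> ('a \<Rightarrow> real) \<Rightarrow> ('a \<Rightarrow> real) \<Rightarrow> ('a set \<Rightarrow> 'a set) \<Rightarrow> bool" where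
  "COM X B f wage Ch \<longleftrightarrow> (\<forall>Y' Y''. Y'' \<subseteq> Y' \<and> Y' \<subseteq> X \<and>
       wtot wage Y'' \<le> max B (wtot wage (Ch Y')) \<longrightarrow> futil f (Ch Y') \<ge> futil f Y'')"

end

theory Submission
  imports Defs "HOL-Library.Product_Lexorder"
begin

lemma prec_asym: "prec f wage tb x y \<Longrightarrow> \<not> prec f wage tb y x"
  unfolding prec_def by auto

lemma prec_irrefl: "\<not> prec f wage tb x x"
  unfolding prec_def by auto

lemma prec_trans: "prec f wage tb x y \<Longrightarrow> prec f wage tb y z \<Longrightarrow> prec f wage tb x z"
  unfolding prec_def by auto

lemma prec_total: "inj_on tb X \<Longrightarrow> x \<in> X \<Longrightarrow> y \<in> X \<Longrightarrow> x \<noteq> y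
   \<Longrightarrow> prec f wage tb x y \<or> prec f wage tb y x"
  unfolding prec_def by (metis inj_on_def linorder_neqE linorder_neqE_nat)

lemma sorted_unique:
  assumes "\<And>x y. R x y \<Longrightarrow> \<not> R y x"
  shows "sorted_wrt R xs \<Longrightarrow> sorted_wrt R ys \<Longrightarrow> distinct xs \<Longrightarrow> distinct ys
    \<Longrightarrow> set xs = set ys \<Longrightarrow> xs = ys"
proof (induction xs arbitrary: ys)
  case Nil then show ?case by simp
next
  case (Cons a xs')
  then obtain b ys' where ys: "ys = b # ys'" by (cases ys) auto
  have "a = b"
  proof (rule ccontr)
    assume "a \<noteq> b"
    then have "b \<in> set xs'" "a \<in> set ys'" using Cons.prems ys by auto
    then have "R a b" "R b a" using Cons.prems ys by auto
    then show False using assms by blast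
  qed
  then have "set xs' = set ys'" using Cons.prems ys by auto
  then show ?case using Cons ys \<open>a = b\<close> by auto
qed

lemma sorted_exists:
  assumes "finite S" "S \<subseteq> X" "inj_on tb X"
  shows "\<exists>xs. set xs = S \<and> distinct xs \<and> sorted_wrt (prec f wage tb) xs"
proof -
  obtain ys where ys: "set ys = S" "distinct ys" using finite_distinct_list[OF assms(1)] by blast
  define key where "key = (\<lambda>x. (- (f x / wage x), tb x))"
  define xs where "xs = sort_key key ys"
  have s: "set xs = S" "distinct xs" using ys by (auto simp: xs_def)
  have "sorted (map key xs)" by (simp add: xs_def sorted_sort_key)
  moreover have "inj_on key (set xs)"
    using assms(2,3) s unfolding key_def inj_on_def by auto
  then have "distinct (map key xs)" using s by (simp add: distinct_map)
  ultimately have "sorted_wrt (<) (map key xs)" by (simp add: strict_sorted_iff)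
  then have "sorted_wrt (\<lambda>x y. key x < key y) xs" by (simp add: sorted_wrt_map)
  then have "sorted_wrt (prec f wage tb) xs"
    by (rule sorted_wrt_mono_rel[rotated]) (auto simp: key_def prec_def)
  then show ?thesis using s by blast
qed

lemma sorted_contracts_props:
  assumes "finite S" "S \<subseteq> X" "inj_on tb X"
  shows "set (sorted_contracts f wage tb S) = S \<and> distinct (sorted_contracts f wage tb S)
    \<and> sorted_wrt (prec f wage tb) (sorted_contracts f wage tb S)"
  unfolding sorted_contracts_def
proof (rule theI')
  show "\<exists>!xs. set xs = S \<and> distinct xs \<and> sorted_wrt (prec f wage tb) xs"
    using sorted_exists[OF assms] sorted_unique[of "prec f wage tb", OF prec_asym] by metis
qed


lemma wtot_mono: "finite T \<Longrightarrow> S \<subseteq> T \<Longrightarrow> (\<And>x. x \<in> T \<Longrightarrow> 0 < wage x) \<Longrightarrow> wtot wage S \<le> wtot wage T"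
  unfolding wtot_def by (rule sum_mono2) (auto intro: less_imp_le)

lemma fold_char:
  assumes "sorted_wrt (prec f wage tb) xs" "distinct xs" "\<And>x. x \<in> set xs \<Longrightarrow> 0 < wage x"
  shows "foldl (greedy_step B wage) {} xs = {x\<in>set xs. wtot wage {y\<in>set xs. prec f wage tb y x} < B}
     \<and> (foldl (greedy_step B wage) {} xs = set xs \<or> B \<le> wtot wage (foldl (greedy_step B wage) {} xs))"
  using assms
proof (induction xs rule: rev_induct)
  case Nil then show ?case by simp
next
  case (snoc a xs)
  let ?Y = "foldl (greedy_step B wage) {} xs"
  have pa: "\<And>y. y \<in> set xs \<Longrightarrow> prec f wage tb y a" using snoc.prems(1) by (simp add: sorted_wrt_append)
  have IH: "?Y = {x\<in>set xs. wtot wage {y\<in>set xs. prec f wage tb y x} < B}"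
     "?Y = set xs \<or> B \<le> wtot wage ?Y"
    using snoc by (auto simp: sorted_wrt_append)
  have e1: "\<And>x. x \<in> set xs \<Longrightarrow> {y\<in>set (xs@[a]). prec f wage tb y x} = {y\<in>set xs. prec f wage tb y x}"
    using pa prec_asym by fastforce
  have e2: "{y\<in>set (xs@[a]). prec f wage tb y a} = set xs" using pa prec_irrefl by fastforce
  have sub: "?Y \<subseteq> set xs" using IH(1) by auto
  show ?case
  proof (cases "wtot wage ?Y < B")
    case True
    then have Yeq: "?Y = set xs" using IH(2) by auto
    have st: "foldl (greedy_step B wage) {} (xs@[a]) = insert a (set xs)"
      using True Yeq by (simp add: greedy_step_def)
    have "{x\<in>set (xs@[a]). wtot wage {y\<in>set (xs@[a]). prec f wage tb y x} < B} = insert a (set xs)"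
    proof -
      have "\<And>x. x \<in> set xs \<Longrightarrow> wtot wage {y\<in>set (xs@[a]). prec f wage tb y x} < B"
      proof -
        fix x assume x: "x \<in> set xs"
        then have "x \<in> ?Y" using Yeq by simp
        then have "wtot wage {y\<in>set xs. prec f wage tb y x} < B" using IH(1) by simp
        then show "wtot wage {y\<in>set (xs@[a]). prec f wage tb y x} < B" using e1[OF x] by simp
      qed
      moreover have "wtot wage {y\<in>set (xs@[a]). prec f wage tb y a} < B" using e2 True Yeq by simp
      ultimately show ?thesis by auto
    qed
    then show ?thesis using st by simp
  next
    case False
    then have "B \<le> wtot wage (set xs)" using wtot_mono[OF _ sub] snoc.prems(3) by fastforce
    have st: "foldl (greedy_step B wage) {} (xs@[a]) = ?Y"
      using False by (simp add: greedy_step_def)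
    have "{x\<in>set (xs@[a]). wtot wage {y\<in>set (xs@[a]). prec f wage tb y x} < B} = ?Y"
    proof -
      have "{x\<in>set (xs@[a]). wtot wage {y\<in>set (xs@[a]). prec f wage tb y x} < B}
        = {x\<in>set xs. wtot wage {y\<in>set (xs@[a]). prec f wage tb y x} < B}"
      proof (rule set_eqI)
        fix x
        have na: "\<not> wtot wage {y\<in>set (xs@[a]). prec f wage tb y a} < B"
          unfolding e2 using \<open>B \<le> wtot wage (set xs)\<close> by simp
        show "x \<in> {x\<in>set (xs@[a]). wtot wage {y\<in>set (xs@[a]). prec f wage tb y x} < B} \<longleftrightarrow>
          x \<in> {x\<in>set xs. wtot wage {y\<in>set (xs@[a]). prec f wage tb y x} < B}"
          using na by (cases "x = a") simp_all
      qed
      also have "\<dots> = {x\<in>set xs. wtot wage {y\<in>set xs. prec f wage tb y x} < B}"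
        by (rule Collect_cong) (use e1 in auto)
      also have "\<dots> = ?Y" using IH(1) by simp
      finally show ?thesis .
    qed
    then show ?thesis using st False by simp
  qed
qed

lemma Ch_char:
  assumes "finite X" "S \<subseteq> X" "inj_on tb X" "\<And>x. x \<in> X \<Longrightarrow> 0 < wage x"
  shows "Ch_greedy B f wage tb S = {x\<in>S. wtot wage {y\<in>S. prec f wage tb y x} < B}
     \<and> (Ch_greedy B f wage tb S = S \<or> B \<le> wtot wage (Ch_greedy B f wage tb S))"
proof -
  have fs: "finite S" using assms(1,2) finite_subset by blast
  note p = sorted_contracts_props[OF fs assms(2,3), of f wage]
  have w: "\<And>x. x \<in> set (sorted_contracts f wage tb S) \<Longrightarrow> 0 < wage x"
    using p assms(2,4) by blast
  have se: "set (sorted_contracts f wage tb S) = S" using p by blast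
  have fc: "foldl (greedy_step B wage) {} (sorted_contracts f wage tb S) =
      {x\<in>set (sorted_contracts f wage tb S). wtot wage {y\<in>set (sorted_contracts f wage tb S). prec f wage tb y x} < B}
     \<and> (foldl (greedy_step B wage) {} (sorted_contracts f wage tb S) = set (sorted_contracts f wage tb S)
       \<or> B \<le> wtot wage (foldl (greedy_step B wage) {} (sorted_contracts f wage tb S)))"
    by (rule fold_char) (use p w in auto)
  show ?thesis unfolding Ch_greedy_def using fc unfolding se .
qed


theorem lemma3:
  fixes X :: "'a set" and B :: real and wage f :: "'a \<Rightarrow> real" and tb :: "'a \<Rightarrow> nat"
  assumes "finite X" and "B > 0"
    and "\<And>x. x \<in> X \<Longrightarrow> 0 < wage x \<and> wage x \<le> B"
    and "\<And>x. x \<in> X \<Longrightarrow> f x > 0"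
    and "inj_on tb X"
  shows "SUB X (Ch_greedy B f wage tb) \<and> IRC X (Ch_greedy B f wage tb)
       \<and> COM X B f wage (Ch_greedy B f wage tb)"
proof -
  let ?Ch = "Ch_greedy B f wage tb"
  let ?P = "prec f wage tb"
  have wpos: "\<And>x. x \<in> X \<Longrightarrow> 0 < wage x" using assms(3) by blast
  have ch: "?Ch S = {x\<in>S. wtot wage {y\<in>S. ?P y x} < B}" if "S \<subseteq> X" for S
    by (rule conjunct1[OF Ch_char[OF assms(1) that assms(5) wpos]])
  have ch2: "?Ch S = S \<or> B \<le> wtot wage (?Ch S)" if "S \<subseteq> X" for S
    by (rule conjunct2[OF Ch_char[OF assms(1) that assms(5) wpos]])
  have fin: "\<And>S. S \<subseteq> X \<Longrightarrow> finite S" using assms(1) finite_subset by blast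
  have wm: "wtot wage S \<le> wtot wage T" if "T \<subseteq> X" "S \<subseteq> T" for S T
    using wtot_mono[OF fin[OF that(1)] that(2), of wage] wpos that(1) by blast
  have down: "\<And>S c y. S \<subseteq> X \<Longrightarrow> c \<in> ?Ch S \<Longrightarrow> y \<in> S \<Longrightarrow> y \<notin> ?Ch S \<Longrightarrow> ?P c y"
  proof -
    fix S c y assume S: "S \<subseteq> X" and c: "c \<in> ?Ch S" and y: "y \<in> S" "y \<notin> ?Ch S"
    have cS: "c \<in> S" and cw: "wtot wage {z\<in>S. ?P z c} < B" using c ch[OF S] by auto
    have yw: "\<not> wtot wage {z\<in>S. ?P z y} < B" using y ch[OF S] by auto
    have "c \<noteq> y" using c y by auto
    then have "?P c y \<or> ?P y c" using prec_total[OF assms(5)] cS y S by blast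
    moreover have "\<not> ?P y c"
    proof
      assume "?P y c"
      then have sb: "{z\<in>S. ?P z y} \<subseteq> {z\<in>S. ?P z c}" using prec_trans[of f wage tb _ y c] by blast
      have "wtot wage {z\<in>S. ?P z y} \<le> wtot wage {z\<in>S. ?P z c}" by (rule wm) (use S sb in blast)+
      then show False using cw yw by linarith
    qed
    ultimately show "?P c y" by blast
  qed
  have SUB: "SUB X ?Ch"
    unfolding SUB_def
  proof (intro allI impI subsetI)
    fix Y' Y'' x assume h: "Y'' \<subseteq> Y' \<and> Y' \<subseteq> X" and x: "x \<in> Y'' - ?Ch Y''"
    have Y'': "Y'' \<subseteq> X" using h by blast
    have "\<not> wtot wage {y\<in>Y''. ?P y x} < B" using x ch[OF Y''] by auto
    moreover have "wtot wage {y\<in>Y''. ?P y x} \<le> wtot wage {y\<in>Y'. ?P y x}"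
      by (rule wm) (use h in blast)+
    ultimately have "\<not> wtot wage {y\<in>Y'. ?P y x} < B" by linarith
    moreover have "x \<in> Y'" using x h by blast
    ultimately show "x \<in> Y' - ?Ch Y'" using ch[of Y'] h by simp
  qed
  have IRC: "IRC X ?Ch"
    unfolding IRC_def
  proof (intro allI impI)
    fix Y' Y'' assume h: "Y' \<subseteq> X \<and> Y'' \<subseteq> X - Y' \<and> ?Ch (Y' \<union> Y'') \<subseteq> Y'"
    let ?U = "Y' \<union> Y''"
    have U: "?U \<subseteq> X" and Y': "Y' \<subseteq> X" using h by auto
    show "?Ch Y' = ?Ch ?U"
    proof
      show "?Ch ?U \<subseteq> ?Ch Y'"
      proof
        fix c assume c: "c \<in> ?Ch ?U"
        then have "c \<in> Y'" using h by blast
        have "wtot wage {y\<in>Y'. ?P y c} \<le> wtot wage {y\<in>?U. ?P y c}" by (rule wm) (use U in blast)+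
        moreover have "wtot wage {y\<in>?U. ?P y c} < B" using c ch[OF U] by auto
        ultimately show "c \<in> ?Ch Y'" using \<open>c \<in> Y'\<close> ch[OF Y'] by auto
      qed
    next
      show "?Ch Y' \<subseteq> ?Ch ?U"
      proof
        fix x assume x: "x \<in> ?Ch Y'"
        then have xY: "x \<in> Y'" and xw: "wtot wage {y\<in>Y'. ?P y x} < B" using ch[OF Y'] by auto
        show "x \<in> ?Ch ?U"
        proof (rule ccontr)
          assume nx: "x \<notin> ?Ch ?U"
          then have "?Ch ?U \<noteq> ?U" using xY by blast
          then have Bw: "B \<le> wtot wage (?Ch ?U)" using ch2[OF U] by blast
          have "?Ch ?U \<subseteq> {y\<in>Y'. ?P y x}"
            using down[OF U _ _ nx] xY h by blast
          then have sb: "?Ch ?U \<subseteq> {y\<in>Y'. ?P y x}" .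
          have "wtot wage (?Ch ?U) \<le> wtot wage {y\<in>Y'. ?P y x}" by (rule wm) (use Y' sb in blast)+
          then show False using Bw xw by linarith
        qed
      qed
    qed
  qed
  have COM: "COM X B f wage ?Ch"
    unfolding COM_def
  proof (intro allI impI)
    fix Y' Y'' assume h: "Y'' \<subseteq> Y' \<and> Y' \<subseteq> X \<and> wtot wage Y'' \<le> max B (wtot wage (?Ch Y'))"
    have Y': "Y' \<subseteq> X" using h by blast
    have fY': "finite Y'" using fin[OF Y'] .
    let ?C = "?Ch Y'"
    have CY: "?C \<subseteq> Y'" using ch[OF Y'] by auto
    have fpos: "\<And>x. x \<in> Y' \<Longrightarrow> 0 < f x" using assms(4) Y' by blast
    show "futil f ?C \<ge> futil f Y''"
    proof (cases "?C = Y'")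
      case True
      then show ?thesis unfolding futil_def using h fY' fpos
        by (intro sum_mono2) (auto intro: less_imp_le)
    next
      case False
      then have Bw: "B \<le> wtot wage ?C" using ch2[OF Y'] by blast
      then have wle: "wtot wage Y'' \<le> wtot wage ?C" using h by linarith
      have fC: "finite ?C" using fY' CY finite_subset by blast
      have Cne: "?C \<noteq> {}" using Bw assms(2) by (auto simp: wtot_def)
      define r where "r = Min ((\<lambda>c. f c / wage c) ` ?C)"
      have rC: "\<And>c. c \<in> ?C \<Longrightarrow> r * wage c \<le> f c"
      proof -
        fix c assume c: "c \<in> ?C"
        have "r \<le> f c / wage c" unfolding r_def using fC c by simp
        moreover have "0 < wage c" using c CY Y' wpos by blast
        ultimately show "r * wage c \<le> f c" by (simp add: pos_le_divide_eq)
      qed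
      have rpos: "0 \<le> r"
      proof -
        obtain c where c: "c \<in> ?C" "r = f c / wage c" unfolding r_def using fC Cne
          by (metis (no_types, lifting) Min_in finite_imageI image_iff image_is_empty)
        then have "0 < wage c" "0 < f c" using CY Y' wpos fpos by blast+
        then show ?thesis using c by simp
      qed
      have rO: "\<And>y. y \<in> Y' - ?C \<Longrightarrow> f y \<le> r * wage y"
      proof -
        fix y assume y: "y \<in> Y' - ?C"
        obtain c where c: "c \<in> ?C" "r = f c / wage c" unfolding r_def using fC Cne
          by (metis (no_types, lifting) Min_in finite_imageI image_iff image_is_empty)
        have "?P c y" using down[OF Y' c(1)] y by blast
        then have "f y / wage y \<le> r" unfolding prec_def c(2) by auto
        moreover have "0 < wage y" using y Y' wpos by blast
        ultimately show "f y \<le> r * wage y" by (simp add: pos_divide_le_eq)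
      qed
      have fin2: "finite Y''" using fY' h finite_subset by blast
      have s1: "futil f Y'' = sum f (Y'' \<inter> ?C) + sum f (Y'' - ?C)"
        unfolding futil_def by (rule sum.Int_Diff[OF fin2])
      have s2: "futil f ?C = sum f (Y'' \<inter> ?C) + sum f (?C - Y'')"
        unfolding futil_def using sum.Int_Diff[OF fC, of f Y''] by (simp add: Int_commute)
      have w1: "wtot wage Y'' = wtot wage (Y'' \<inter> ?C) + wtot wage (Y'' - ?C)"
        unfolding wtot_def by (rule sum.Int_Diff[OF fin2])
      have w2: "wtot wage ?C = wtot wage (Y'' \<inter> ?C) + wtot wage (?C - Y'')"
        unfolding wtot_def using sum.Int_Diff[OF fC, of wage Y''] by (simp add: Int_commute)
      have a: "sum f (Y'' - ?C) \<le> r * wtot wage (Y'' - ?C)"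
        unfolding wtot_def sum_distrib_left using rO h by (intro sum_mono) auto
      have b: "r * wtot wage (Y'' - ?C) \<le> r * wtot wage (?C - Y'')"
        using wle w1 w2 rpos by (intro mult_left_mono) linarith+
      have c: "r * wtot wage (?C - Y'') \<le> sum f (?C - Y'')"
        unfolding wtot_def sum_distrib_left using rC by (intro sum_mono) auto
      show ?thesis using s1 s2 a b c by linarith
    qed
  qed
  show ?thesis using SUB IRC COM by blast
qed

end
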